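(* Let $(D,T,\lambda)$ be a complete structured DNNF and $Z\subseteq\mathrm{var}(D)$. Let $t$ be a non-leaf node of $T$ with children $t_1,t_2$. Let $\tau_1:\mathsf{kept}(t_1)\to\{0,1\}$ be of shape $S_1$ and $\tau_2:\mathsf{kept}(t_2)\to\{0,1\}$ be of shape $S_2$. Then $\tau=\tau_1\cup\tau_2$ (an assignment of $\mathsf{kept}(t)$) is of shape $S_1\bowtie S_2$.
   Context: A DNNF is a Boolean circuit whose input gates are labeled by literals $x$ or $\neg x$, whose other gates are $\wedge$-gates and $\vee$-gates, and in which every $\wedge$-gate is decomposable: the subcircuits rooted at distinct inputs of it mention pairwise disjoint sets of variables. For a gate $v$, $D_v$ denotes the subcircuit rooted at $v$. A vtree for a variable set $X$ is a rooted tree in which every non-leaf node has exactly two children and whose leaves are in bijection with $X$. A complete structured DNNF $(D,T,\lambda)$ consists of a DNNF $D$, a vtree $T$ for $\mathrm{var}(D)$, and a map $\lambda$ assigning to every node $t$ of $T$ a set $\lambda(t)$ of gates of $D$ such that: (i) every gate $u$ of $D$ lies in $\lambda(t_u)$ for exactly one node $t_u$; (ii) if $t$ is a leaf labeled $x$ then $\lambda(t)$ contains only input gates labeled $x$ or $\neg x$; (iii) for no non-leaf node $t$ does $\lambda(t)$ contain an input gate; (iv) every $\wedge$-gate $u$ has exactly two inputs $v_1,v_2$ and $t_{v_1}\ne t_{v_2}$; (v) for every wire from a gate $u$ into a gate $v$, either $v$ is an $\wedge$-gate, $u$ is a $\vee$-gate or an input gate, and $t_u$ is a child of $t_v$; or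 $v$ is a $\vee$-gate, $u$ is an $\wedge$-gate and $t_u=t_v$. For a node $t$ of $T$, $\mathrm{var}(t)$ is the set of variables labeling leaves of the subtree rooted at $t$, $\mathsf{forgot}(t)=Z\cap\mathrm{var}(t)$ and $\mathsf{kept}(t)=\mathrm{var}(t)\setminus\mathsf{forgot}(t)$. Let $O_t$ be the set of gates of $\lambda(t)$ that are not $\wedge$-gates (i.e. the $\vee$-gates of $\lambda(t)$ if $t$ is internal, the input gates of $\lambda(t)$ if $t$ is a leaf). An assignment $\tau:\mathsf{kept}(t)\to\{0,1\}$ is of shape $S\subseteq O_t$ iff $S=\{s\in O_t\mid \exists\sigma:\mathsf{forgot}(t)\to\{0,1\},\ \tau\cup\sigma\text{ satisfies }D_s\}$. For a non-leaf $t$ with children $t_1,t_2$ and $S_1\subseteq O_{t_1}$, $S_2\subseteq O_{t_2}$, $S_1\bowtie S_2\subseteq O_t$ is the set of gates $s\in O_t$ that evaluate to $1$ when every gate of $S_1\cup S_2$ is replaced by the constant $1$ and every gate of $(O_{t_1}\setminus S_1)\cup(O_{t_2}\setminus S_2)$ by the constant $0$. *)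

theory Defs
  imports Main
begin

text \<open>Gate labels: input gates labelled by a literal (variable, polarity;
  Lit x True is x, Lit x False is the negation of x), and AND/OR gates.\<close>
datatype 'v gkind = Lit 'v bool | AndG | OrG

text \<open>A circuit is given by a set of gates G, a labelling kind, and a set of
  wires W; (u,v) in W is a wire from gate u into gate v (u is an input of v).\<close>

definition below :: "('g \<times> 'g) set \<Rightarrow> 'g \<Rightarrow> 'g set" where
  "below W v = {u. (u, v) \<in> W\<^sup>*}"

definition gvars :: "('g \<Rightarrow> 'v gkind) \<Rightarrow> ('g \<times> 'g) set \<Rightarrow> 'g \<Rightarrow> 'v set" where
  "gvars kind W v = {x. \<exists>u \<in> below W v. \<exists>b. kind u = Lit x b}"

definition cvars :: "'g set \<Rightarrow> ('g \<Rightarrow> 'v gkind) \<Rightarrow> ('g \<times> 'g) set \<Rightarrow> 'v set" where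
  "cvars G kind W = (\<Union>v\<in>G. gvars kind W v)"

definition dnnf :: "'g set \<Rightarrow> ('g \<Rightarrow> 'v gkind) \<Rightarrow> ('g \<times> 'g) set \<Rightarrow> bool" where
  "dnnf G kind W \<longleftrightarrow>
     finite G \<and> W \<subseteq> G \<times> G \<and> acyclic W \<and>
     (\<forall>u v x b. (u, v) \<in> W \<longrightarrow> kind v \<noteq> Lit x b) \<and>
     (\<forall>v \<in> G. kind v = AndG \<longrightarrow>
        (\<forall>u1 u2. (u1, v) \<in> W \<longrightarrow> (u2, v) \<in> W \<longrightarrow> u1 \<noteq> u2 \<longrightarrow>
            gvars kind W u1 \<inter> gvars kind W u2 = {}))"

text \<open>Evaluation to 1 of gate g under a partial assignment rho, where the gates
  in one are replaced by the constant 1 and the gates in zero by the constant 0.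
  For an acyclic circuit this least-fixpoint characterisation coincides with
  ordinary evaluation.\<close>
inductive eval1 :: "'g set \<Rightarrow> ('g \<Rightarrow> 'v gkind) \<Rightarrow> ('g \<times> 'g) set \<Rightarrow> ('v \<Rightarrow> bool option)
    \<Rightarrow> 'g set \<Rightarrow> 'g set \<Rightarrow> 'g \<Rightarrow> bool"
  for G kind W rho one zero where
  const1: "g \<in> one \<Longrightarrow> eval1 G kind W rho one zero g"
| lit: "g \<in> G \<Longrightarrow> g \<notin> one \<Longrightarrow> g \<notin> zero \<Longrightarrow> kind g = Lit x b \<Longrightarrow> rho x = Some b
        \<Longrightarrow> eval1 G kind W rho one zero g"
| andg: "g \<in> G \<Longrightarrow> g \<notin> one \<Longrightarrow> g \<notin> zero \<Longrightarrow> kind g = AndG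
        \<Longrightarrow> (\<forall>u. (u, g) \<in> W \<longrightarrow> eval1 G kind W rho one zero u)
        \<Longrightarrow> eval1 G kind W rho one zero g"
| org: "g \<in> G \<Longrightarrow> g \<notin> one \<Longrightarrow> g \<notin> zero \<Longrightarrow> kind g = OrG
        \<Longrightarrow> (u, g) \<in> W \<Longrightarrow> eval1 G kind W rho one zero u
        \<Longrightarrow> eval1 G kind W rho one zero g"

definition sat :: "'g set \<Rightarrow> ('g \<Rightarrow> 'v gkind) \<Rightarrow> ('g \<times> 'g) set \<Rightarrow> ('v \<Rightarrow> bool option) \<Rightarrow> 'g \<Rightarrow> bool" where
  "sat G kind W rho g = eval1 G kind W rho {} {} g"

text \<open>A node of a vtree is identified with the subtree rooted at it (this is
  unambiguous since leaves carry pairwise distinct variables).\<close>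
datatype 'v vtree = VLeaf 'v | VNode "'v vtree" "'v vtree"

fun leaves :: "'v vtree \<Rightarrow> 'v list" where
  "leaves (VLeaf x) = [x]"
| "leaves (VNode l r) = leaves l @ leaves r"

fun subtrees :: "'v vtree \<Rightarrow> 'v vtree set" where
  "subtrees (VLeaf x) = {VLeaf x}"
| "subtrees (VNode l r) = insert (VNode l r) (subtrees l \<union> subtrees r)"

definition vvars :: "'v vtree \<Rightarrow> 'v set" where
  "vvars t = set (leaves t)"

definition is_vtree_for :: "'v vtree \<Rightarrow> 'v set \<Rightarrow> bool" where
  "is_vtree_for T X \<longleftrightarrow> distinct (leaves T) \<and> set (leaves T) = X"

definition tnode :: "'v vtree \<Rightarrow> ('v vtree \<Rightarrow> 'g set) \<Rightarrow> 'g \<Rightarrow> 'v vtree" where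
  "tnode T lam u = (THE t. t \<in> subtrees T \<and> u \<in> lam t)"

definition is_child :: "'v vtree \<Rightarrow> 'v vtree \<Rightarrow> bool" where
  "is_child c p \<longleftrightarrow> (\<exists>l r. p = VNode l r \<and> (c = l \<or> c = r))"

definition complete_sdnnf ::
  "'g set \<Rightarrow> ('g \<Rightarrow> 'v gkind) \<Rightarrow> ('g \<times> 'g) set \<Rightarrow> 'v vtree \<Rightarrow> ('v vtree \<Rightarrow> 'g set) \<Rightarrow> bool" where
  "complete_sdnnf G kind W T lam \<longleftrightarrow>
     dnnf G kind W \<and> is_vtree_for T (cvars G kind W) \<and>
     (\<forall>t \<in> subtrees T. lam t \<subseteq> G) \<and>
     \<comment> \<open>(i)\<close>
     (\<forall>u \<in> G. \<exists>!t. t \<in> subtrees T \<and> u \<in> lam t) \<and>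
     \<comment> \<open>(ii)\<close>
     (\<forall>x. VLeaf x \<in> subtrees T \<longrightarrow> (\<forall>u \<in> lam (VLeaf x). \<exists>b. kind u = Lit x b)) \<and>
     \<comment> \<open>(iii)\<close>
     (\<forall>l r. VNode l r \<in> subtrees T \<longrightarrow> (\<forall>u \<in> lam (VNode l r). \<forall>x b. kind u \<noteq> Lit x b)) \<and>
     \<comment> \<open>(iv)\<close>
     (\<forall>u \<in> G. kind u = AndG \<longrightarrow>
        (\<exists>v1 v2. v1 \<noteq> v2 \<and> {v. (v, u) \<in> W} = {v1, v2} \<and>
                 tnode T lam v1 \<noteq> tnode T lam v2)) \<and>
     \<comment> \<open>(v)\<close>
     (\<forall>u v. (u, v) \<in> W \<longrightarrow>
        (kind v = AndG \<and> kind u \<noteq> AndG \<and> is_child (tnode T lam u) (tnode T lam v)) \<or>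
        (kind v = OrG \<and> kind u = AndG \<and> tnode T lam u = tnode T lam v))"

definition forgot :: "'v set \<Rightarrow> 'v vtree \<Rightarrow> 'v set" where
  "forgot Z t = Z \<inter> vvars t"

definition kept :: "'v set \<Rightarrow> 'v vtree \<Rightarrow> 'v set" where
  "kept Z t = vvars t - forgot Z t"

definition Ogates :: "('g \<Rightarrow> 'v gkind) \<Rightarrow> ('v vtree \<Rightarrow> 'g set) \<Rightarrow> 'v vtree \<Rightarrow> 'g set" where
  "Ogates kind lam t = {g \<in> lam t. kind g \<noteq> AndG}"

text \<open>tau (an assignment of kept(t), i.e. a partial map with domain kept(t)) is of shape S.
  The union tau \<union> sigma of assignments with disjoint domains is tau ++ sigma.\<close>
definition of_shape ::
  "'g set \<Rightarrow> ('g \<Rightarrow> 'v gkind) \<Rightarrow> ('g \<times> 'g) set \<Rightarrow> ('v vtree \<Rightarrow> 'g set) \<Rightarrow> 'v set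
   \<Rightarrow> 'v vtree \<Rightarrow> ('v \<Rightarrow> bool option) \<Rightarrow> 'g set \<Rightarrow> bool" where
  "of_shape G kind W lam Z t tau S \<longleftrightarrow>
     S = {s \<in> Ogates kind lam t. \<exists>sigma. dom sigma = forgot Z t \<and> sat G kind W (tau ++ sigma) s}"

text \<open>S1 \<bowtie> S2: gates of O_t evaluating to 1 when gates of S1 \<union> S2 are replaced by 1 and
  gates of (O_t1 - S1) \<union> (O_t2 - S2) by 0 (no variable is assigned; in a complete
  structured DNNF no literal gate below O_t is reached without passing through a
  replaced gate).\<close>
definition join ::
  "'g set \<Rightarrow> ('g \<Rightarrow> 'v gkind) \<Rightarrow> ('g \<times> 'g) set \<Rightarrow> ('v vtree \<Rightarrow> 'g set)
   \<Rightarrow> 'v vtree \<Rightarrow> 'v vtree \<Rightarrow> 'g set \<Rightarrow> 'g set \<Rightarrow> 'g set" where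
  "join G kind W lam t1 t2 S1 S2 =
     {s \<in> Ogates kind lam (VNode t1 t2).
        eval1 G kind W Map.empty (S1 \<union> S2)
          ((Ogates kind lam t1 - S1) \<union> (Ogates kind lam t2 - S2)) s}"

end

theory Submission
  imports Defs
begin


lemma subtrees_refl: "t \<in> subtrees t" by (cases t) auto

lemma subtrees_trans: "s \<in> subtrees t \<Longrightarrow> u \<in> subtrees s \<Longrightarrow> u \<in> subtrees t"
  by (induction t) auto

lemma leaves_sub: "s \<in> subtrees t \<Longrightarrow> \<exists>xs ys. leaves t = xs @ leaves s @ ys"
proof (induction t)
  case (VLeaf x) then show ?case by auto
next
  case (VNode l r)
  then show ?case
  proof (cases "s = VNode l r")
    case True then show ?thesis by (metis append.left_neutral append_Nil2)
  next
    case False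
    then have "s \<in> subtrees l \<or> s \<in> subtrees r" using VNode.prems by auto
    then show ?thesis
    proof
      assume "s \<in> subtrees l"
      then obtain xs ys where "leaves l = xs @ leaves s @ ys" using VNode.IH by blast
      then show ?thesis by (rule_tac x=xs in exI, rule_tac x="ys @ leaves r" in exI) simp
    next
      assume "s \<in> subtrees r"
      then obtain xs ys where "leaves r = xs @ leaves s @ ys" using VNode.IH by blast
      then show ?thesis by (rule_tac x="leaves l @ xs" in exI, rule_tac x="ys" in exI) simp
    qed
  qed
qed

lemma vvars_sub: "s \<in> subtrees t \<Longrightarrow> vvars s \<subseteq> vvars t"
  unfolding vvars_def using leaves_sub by fastforce

lemma distinct_sub: "s \<in> subtrees t \<Longrightarrow> distinct (leaves t) \<Longrightarrow> distinct (leaves s)"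
  using leaves_sub by fastforce

lemma leaves_ne: "leaves t \<noteq> []" by (induction t) auto

lemma subtree_size: "s \<in> subtrees t \<Longrightarrow> size s \<le> size t"
  by (induction t) auto

lemma node_facts:
  assumes "distinct (leaves T)" "VNode l r \<in> subtrees T"
  shows "vvars l \<inter> vvars r = {}" "l \<noteq> r" "VNode l r \<noteq> l" "VNode l r \<noteq> r"
proof -
  have d: "distinct (leaves (VNode l r))" using distinct_sub assms by blast
  then show 1: "vvars l \<inter> vvars r = {}" unfolding vvars_def by simp
  show "l \<noteq> r" using 1 leaves_ne unfolding vvars_def
    by (metis Int_absorb set_empty)
  show "VNode l r \<noteq> l" "VNode l r \<noteq> r" by auto
qed

lemma is_child_sub: "is_child c p \<Longrightarrow> c \<in> subtrees p"
  unfolding is_child_def using subtrees_refl[of c] by auto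

context
  fixes G :: "'g set" and kind :: "'g \<Rightarrow> 'v gkind" and W :: "('g \<times> 'g) set"
    and T :: "'v vtree" and lam :: "'v vtree \<Rightarrow> 'g set"
  assumes cs: "complete_sdnnf G kind W T lam"
begin

lemma cs_W: "(u,v)\<in>W \<Longrightarrow> u \<in> G \<and> v \<in> G"
  using cs unfolding complete_sdnnf_def dnnf_def by auto

lemma cs_lam: "t \<in> subtrees T \<Longrightarrow> lam t \<subseteq> G"
  using cs unfolding complete_sdnnf_def by auto

lemma cs_uniq: "u \<in> G \<Longrightarrow> \<exists>!t. t \<in> subtrees T \<and> u \<in> lam t"
  using cs unfolding complete_sdnnf_def by auto

lemma cs_leaf: "VLeaf x \<in> subtrees T \<Longrightarrow> u \<in> lam (VLeaf x) \<Longrightarrow> \<exists>b. kind u = Lit x b"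
  using cs unfolding complete_sdnnf_def by auto

lemma cs_node: "VNode l r \<in> subtrees T \<Longrightarrow> u \<in> lam (VNode l r) \<Longrightarrow> kind u \<noteq> Lit x b"
  using cs unfolding complete_sdnnf_def by auto

lemma cs_and: "u \<in> G \<Longrightarrow> kind u = AndG \<Longrightarrow>
        (\<exists>v1 v2. v1 \<noteq> v2 \<and> {v. (v, u) \<in> W} = {v1, v2} \<and>
                 tnode T lam v1 \<noteq> tnode T lam v2)"
  using cs unfolding complete_sdnnf_def by auto

lemma cs_wire: "(u, v) \<in> W \<Longrightarrow>
        (kind v = AndG \<and> kind u \<noteq> AndG \<and> is_child (tnode T lam u) (tnode T lam v)) \<or>
        (kind v = OrG \<and> kind u = AndG \<and> tnode T lam u = tnode T lam v)"
  using cs unfolding complete_sdnnf_def by auto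

lemma cs_distinct: "distinct (leaves T)"
  using cs unfolding complete_sdnnf_def is_vtree_for_def by auto

lemma tnode_eq: "t \<in> subtrees T \<Longrightarrow> u \<in> lam t \<Longrightarrow> tnode T lam u = t"
proof -
  assume a: "t \<in> subtrees T" "u \<in> lam t"
  then have "u \<in> G" using cs_lam by blast
  then have "\<exists>!t. t \<in> subtrees T \<and> u \<in> lam t" by (rule cs_uniq)
  then show ?thesis unfolding tnode_def using a by (metis (mono_tags, lifting) the_equality)
qed

lemma tnode_in: "u \<in> G \<Longrightarrow> tnode T lam u \<in> subtrees T \<and> u \<in> lam (tnode T lam u)"
  unfolding tnode_def using cs_uniq theI' by (metis (mono_tags, lifting))

lemma lam_unique: "a \<in> subtrees T \<Longrightarrow> b \<in> subtrees T \<Longrightarrow> g \<in> lam a \<Longrightarrow> g \<in> lam b \<Longrightarrow> a = b"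
  using tnode_eq by metis

lemma below_tnode:
  assumes "(u, g) \<in> W\<^sup>*" "g \<in> G"
  shows "u \<in> G \<and> tnode T lam u \<in> subtrees (tnode T lam g)"
  using assms(1)
proof (induction rule: converse_rtrancl_induct)
  case base then show ?case using assms(2) subtrees_refl by blast
next
  case (step y z)
  have "y \<in> G" using step(1) cs_W by blast
  moreover have "tnode T lam y \<in> subtrees (tnode T lam z)"
    using cs_wire[OF step(1)] is_child_sub subtrees_refl by metis
  ultimately show ?case using step(3) subtrees_trans by blast
qed

lemma gvars_tnode:
  assumes "g \<in> G"
  shows "gvars kind W g \<subseteq> vvars (tnode T lam g)"
proof
  fix x assume "x \<in> gvars kind W g"
  then obtain u b where u: "(u,g) \<in> W\<^sup>*" "kind u = Lit x b"
    unfolding gvars_def below_def by auto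
  have uG: "u \<in> G" and st: "tnode T lam u \<in> subtrees (tnode T lam g)"
    using below_tnode[OF u(1) assms] by auto
  have tu: "tnode T lam u \<in> subtrees T" "u \<in> lam (tnode T lam u)" using tnode_in uG by auto
  show "x \<in> vvars (tnode T lam g)"
  proof (cases "tnode T lam u")
    case (VLeaf y)
    then obtain b' where "kind u = Lit y b'" using cs_leaf tu by metis
    then have "x = y" using u(2) by simp
    then have "x \<in> vvars (tnode T lam u)" using VLeaf by (simp add: vvars_def)
    then show ?thesis using vvars_sub st by blast
  next
    case (VNode l r)
    then show ?thesis using cs_node tu u(2) by metis
  qed
qed

end


lemma gvars_mono: "(u,g) \<in> W \<Longrightarrow> gvars kind W u \<subseteq> gvars kind W g"
  unfolding gvars_def below_def by (auto intro: rtrancl_into_rtrancl)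

lemma eval1_local:
  "eval1 G kind W rho one zero g \<Longrightarrow> (\<forall>x\<in>gvars kind W g. rho x = rho' x)
   \<Longrightarrow> eval1 G kind W rho' one zero g"
proof (induction rule: eval1.induct)
  case (const1 g) then show ?case using const1 by (auto intro: eval1.const1)
next
  case (lit g x b)
  have "x \<in> gvars kind W g" using lit unfolding gvars_def below_def by auto
  then show ?case using lit by (auto intro: eval1.lit)
next
  case (andg g)
  have "\<forall>u. (u, g) \<in> W \<longrightarrow> eval1 G kind W rho' one zero u"
  proof (intro allI impI)
    fix u assume u: "(u,g) \<in> W"
    then have "gvars kind W u \<subseteq> gvars kind W g" by (rule gvars_mono)
    then have "\<forall>x\<in>gvars kind W u. rho x = rho' x" using andg.prems by blast
    then show "eval1 G kind W rho' one zero u" using andg.IH u by blast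
  qed
  then show ?case using andg.hyps by (intro eval1.andg) auto
next
  case (org g u)
  have "gvars kind W u \<subseteq> gvars kind W g" using org.hyps(5) by (rule gvars_mono)
  then have "\<forall>x\<in>gvars kind W u. rho x = rho' x" using org.prems by blast
  then have e: "eval1 G kind W rho' one zero u" using org.IH by blast
  show ?case using org.hyps by (intro eval1.org[OF _ _ _ _ org.hyps(5) e]) auto
qed

lemma eval1_zero: "eval1 G kind W rho one zero g \<Longrightarrow> g \<in> zero \<Longrightarrow> g \<in> one"
  by (erule eval1.cases) auto


theorem lemma3:
  fixes G :: "'g set" and kind :: "'g \<Rightarrow> 'v gkind" and W :: "('g \<times> 'g) set"
    and T :: "'v vtree" and lam :: "'v vtree \<Rightarrow> 'g set" and Z :: "'v set"
    and t1 t2 :: "'v vtree" and tau1 tau2 :: "'v \<Rightarrow> bool option" and S1 S2 :: "'g set"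
  assumes "complete_sdnnf G kind W T lam"
    and "Z \<subseteq> cvars G kind W"
    and "VNode t1 t2 \<in> subtrees T"
    and "dom tau1 = kept Z t1" and "of_shape G kind W lam Z t1 tau1 S1"
    and "dom tau2 = kept Z t2" and "of_shape G kind W lam Z t2 tau2 S2"
  shows "dom (tau1 ++ tau2) = kept Z (VNode t1 t2)
     \<and> of_shape G kind W lam Z (VNode t1 t2) (tau1 ++ tau2) (join G kind W lam t1 t2 S1 S2)"
proof -
  note cs = assms(1)
  define t where "t = VNode t1 t2"
  define O1 where "O1 = Ogates kind lam t1"
  define O2 where "O2 = Ogates kind lam t2"
  define Ot where "Ot = Ogates kind lam t"
  define one where "one = S1 \<union> S2"
  define zero where "zero = (O1 - S1) \<union> (O2 - S2)"
  define tau where "tau = tau1 ++ tau2"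
  have tT: "t \<in> subtrees T" using assms(3) t_def by simp
  have dist: "distinct (leaves T)" using cs_distinct[OF cs] .
  have disj: "vvars t1 \<inter> vvars t2 = {}" "t1 \<noteq> t2" "t \<noteq> t1" "t \<noteq> t2"
    using node_facts[OF dist assms(3)] t_def by auto
  have t1T: "t1 \<in> subtrees T" and t2T: "t2 \<in> subtrees T"
    using subtrees_trans[OF tT] t_def subtrees_refl by auto
  have vt: "vvars t = vvars t1 \<union> vvars t2" unfolding t_def vvars_def by simp
  have ft: "forgot Z t = forgot Z t1 \<union> forgot Z t2" unfolding forgot_def vt by auto
  have kt: "kept Z t = kept Z t1 \<union> kept Z t2" unfolding kept_def forgot_def vt by auto
  have dtau: "dom tau = kept Z t" unfolding tau_def kt using assms(4,6) by auto
  have S1def: "S1 = {s \<in> O1. \<exists>sigma. dom sigma = forgot Z t1 \<and> sat G kind W (tau1 ++ sigma) s}"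
    using assms(5) unfolding of_shape_def O1_def .
  have S2def: "S2 = {s \<in> O2. \<exists>sigma. dom sigma = forgot Z t2 \<and> sat G kind W (tau2 ++ sigma) s}"
    using assms(7) unfolding of_shape_def O2_def .
  have uniq: "\<And>a b g. a \<in> subtrees T \<Longrightarrow> b \<in> subtrees T \<Longrightarrow> g \<in> lam a \<Longrightarrow> g \<in> lam b \<Longrightarrow> a = b"
    using lam_unique[OF cs] by blast
  have O1l: "O1 \<subseteq> lam t1" and O2l: "O2 \<subseteq> lam t2" and Otl: "Ot \<subseteq> lam t"
    unfolding O1_def O2_def Ot_def Ogates_def by auto
  have O12: "O1 \<inter> O2 = {}" using uniq[OF t1T t2T] O1l O2l disj by blast
  have S1O: "S1 \<subseteq> O1" and S2O: "S2 \<subseteq> O2" using S1def S2def by auto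
  have notin: "\<And>g. g \<in> lam t \<Longrightarrow> g \<notin> one \<and> g \<notin> zero"
  proof -
    fix g assume g: "g \<in> lam t"
    have "g \<notin> lam t1" using uniq[OF tT t1T g] disj by blast
    moreover have "g \<notin> lam t2" using uniq[OF tT t2T g] disj by blast
    ultimately show "g \<notin> one \<and> g \<notin> zero" unfolding one_def zero_def
      using S1O S2O O1l O2l by blast
  qed
  have loc: "\<And>v tc rho rho'. v \<in> lam tc \<Longrightarrow> tc \<in> subtrees T \<Longrightarrow>
      (\<forall>x\<in>vvars tc. rho x = rho' x) \<Longrightarrow> sat G kind W rho v \<Longrightarrow> sat G kind W rho' v"
  proof -
    fix v tc rho rho'
    assume a: "v \<in> lam tc" "tc \<in> subtrees T" "\<forall>x\<in>vvars tc. rho x = rho' x" "sat G kind W rho v"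
    have vG: "v \<in> G" using cs_lam[OF cs a(2)] a(1) by blast
    have "tnode T lam v = tc" using tnode_eq[OF cs a(2,1)] .
    then have "gvars kind W v \<subseteq> vvars tc" using gvars_tnode[OF cs vG] by simp
    then have "\<forall>x\<in>gvars kind W v. rho x = rho' x" using a(3) by blast
    then show "sat G kind W rho' v" using a(4) unfolding sat_def by (rule eval1_local[rotated])
  qed
  have kv1: "kept Z t1 \<subseteq> vvars t1" "forgot Z t1 \<subseteq> vvars t1" unfolding kept_def forgot_def by auto
  have kv2: "kept Z t2 \<subseteq> vvars t2" "forgot Z t2 \<subseteq> vvars t2" unfolding kept_def forgot_def by auto
  have sfacts: "\<And>s. s \<in> Ot \<Longrightarrow> s \<in> G \<and> kind s = OrG \<and> s \<notin> one \<and> s \<notin> zero"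
  proof -
    fix s assume s: "s \<in> Ot"
    have sl: "s \<in> lam t" using s Otl by blast
    have "kind s \<noteq> AndG" using s unfolding Ot_def Ogates_def by auto
    moreover have "\<And>x b. kind s \<noteq> Lit x b" using cs_node[OF cs] tT sl t_def by blast
    ultimately have "kind s = OrG" by (cases "kind s") auto
    then show "s \<in> G \<and> kind s = OrG \<and> s \<notin> one \<and> s \<notin> zero"
      using cs_lam[OF cs tT] sl notin by blast
  qed
  have andin: "\<And>s u. s \<in> Ot \<Longrightarrow> (u, s) \<in> W \<Longrightarrow> kind u = AndG \<and> u \<in> G \<and> u \<notin> one \<and> u \<notin> zero
      \<and> (\<exists>a b. {v. (v,u)\<in>W} = {a,b} \<and> a \<in> O1 \<and> b \<in> O2)"
  proof -
    fix s u assume s: "s \<in> Ot" and us: "(u, s) \<in> W"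
    have sf: "s \<in> G" "kind s = OrG" using sfacts[OF s] by auto
    have tns: "tnode T lam s = t" using tnode_eq[OF cs tT] s Otl by blast
    have ku: "kind u = AndG" and tnu: "tnode T lam u = t"
      using cs_wire[OF cs us] sf tns by auto
    have uG: "u \<in> G" using cs_W[OF cs us] by blast
    have ul: "u \<in> lam t" using tnode_in[OF cs uG] tnu by simp
    obtain v1 v2 where v: "v1 \<noteq> v2" "{v. (v, u) \<in> W} = {v1, v2}"
        "tnode T lam v1 \<noteq> tnode T lam v2"
      using cs_and[OF cs uG ku] by blast
    have vO: "tnode T lam v \<in> {t1, t2} \<and> v \<in> Ogates kind lam (tnode T lam v)"
      if "v \<in> {v1, v2}" for v
    proof -
      have vu: "(v, u) \<in> W" using that v(2) by blast
      have "kind v \<noteq> AndG \<and> is_child (tnode T lam v) t"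
        using cs_wire[OF cs vu] ku tnu by auto
      moreover have "v \<in> G" using cs_W[OF cs vu] by blast
      ultimately show ?thesis using tnode_in[OF cs] unfolding is_child_def t_def Ogates_def
        by auto
    qed
    have "\<exists>a b. {v. (v,u)\<in>W} = {a,b} \<and> a \<in> O1 \<and> b \<in> O2"
    proof (cases "tnode T lam v1 = t1")
      case True
      then have "tnode T lam v2 = t2" using vO[of v2] v(3) by auto
      then show ?thesis using True vO[of v1] vO[of v2] v(2) unfolding O1_def O2_def by auto
    next
      case False
      then have "tnode T lam v1 = t2" "tnode T lam v2 = t1" using vO[of v1] vO[of v2] v(3) by auto
      then show ?thesis using vO[of v1] vO[of v2] v(2) unfolding O1_def O2_def
        by (rule_tac x=v2 in exI, rule_tac x=v1 in exI) auto
    qed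
    then show "kind u = AndG \<and> u \<in> G \<and> u \<notin> one \<and> u \<notin> zero
      \<and> (\<exists>a b. {v. (v,u)\<in>W} = {a,b} \<and> a \<in> O1 \<and> b \<in> O2)"
      using ku uG notin[OF ul] by blast
  qed
  have main: "eval1 G kind W Map.empty one zero s \<longleftrightarrow>
      (\<exists>sigma. dom sigma = forgot Z t \<and> sat G kind W (tau ++ sigma) s)" if s: "s \<in> Ot" for s
  proof
    have sf: "s \<in> G" "kind s = OrG" "s \<notin> one" "s \<notin> zero" using sfacts[OF s] by auto
    assume E: "eval1 G kind W Map.empty one zero s"
    obtain u where us: "(u, s) \<in> W" and Eu: "eval1 G kind W Map.empty one zero u"
      using E sf by (cases rule: eval1.cases) auto
    have uf: "kind u = AndG" "u \<in> G" "u \<notin> one" "u \<notin> zero" using andin[OF s us] by auto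
    obtain a b where ab: "{v. (v,u)\<in>W} = {a,b}" "a \<in> O1" "b \<in> O2" using andin[OF s us] by blast
    have allin: "\<forall>w. (w,u) \<in> W \<longrightarrow> eval1 G kind W Map.empty one zero w"
      using Eu uf by (cases rule: eval1.cases) auto
    have aS: "a \<in> S1"
    proof -
      have "eval1 G kind W Map.empty one zero a" using allin ab(1) by blast
      then have "a \<in> one" using eval1_zero[of G kind W _ one zero a] ab(2)
        unfolding zero_def one_def by blast
      then show ?thesis using ab(2) S2O O12 unfolding one_def by blast
    qed
    have bS: "b \<in> S2"
    proof -
      have "eval1 G kind W Map.empty one zero b" using allin ab(1) by blast
      then have "b \<in> one" using eval1_zero[of G kind W _ one zero b] ab(3)
        unfolding zero_def one_def by blast
      then show ?thesis using ab(3) S1O O12 unfolding one_def by blast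
    qed
    obtain s1 where s1: "dom s1 = forgot Z t1" "sat G kind W (tau1 ++ s1) a" using aS S1def by blast
    obtain s2 where s2: "dom s2 = forgot Z t2" "sat G kind W (tau2 ++ s2) b" using bS S2def by blast
    define sigma where "sigma = s1 ++ s2"
    have dsig: "dom sigma = forgot Z t" unfolding sigma_def ft using s1(1) s2(1) by auto
    have ag1: "\<forall>x\<in>vvars t1. (tau1 ++ s1) x = (tau ++ sigma) x"
    proof
      fix x assume x: "x \<in> vvars t1"
      have "x \<notin> dom tau2" "x \<notin> dom s2" using x disj(1) kv2 assms(6) s2(1) by auto
      then show "(tau1 ++ s1) x = (tau ++ sigma) x" unfolding tau_def sigma_def
        by (auto simp: map_add_def split: option.split)
    qed
    have ag2: "\<forall>x\<in>vvars t2. (tau2 ++ s2) x = (tau ++ sigma) x"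
    proof
      fix x assume x: "x \<in> vvars t2"
      have "x \<notin> dom tau1" "x \<notin> dom s1" using x disj(1) kv1 assms(4) s1(1) by auto
      then show "(tau2 ++ s2) x = (tau ++ sigma) x" unfolding tau_def sigma_def
        by (auto simp: map_add_def split: option.split)
    qed
    have sa: "sat G kind W (tau ++ sigma) a" using loc[OF _ t1T ag1 s1(2)] ab(2) O1l by blast
    have sb: "sat G kind W (tau ++ sigma) b" using loc[OF _ t2T ag2 s2(2)] ab(3) O2l by blast
    have su: "eval1 G kind W (tau ++ sigma) {} {} u"
      apply (rule eval1.andg)
      using uf sa sb ab(1) unfolding sat_def by auto
    have "sat G kind W (tau ++ sigma) s" unfolding sat_def
      using sf by (intro eval1.org[OF _ _ _ _ us su]) auto
    then show "\<exists>sigma. dom sigma = forgot Z t \<and> sat G kind W (tau ++ sigma) s" using dsig by blast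
  next
    have sf: "s \<in> G" "kind s = OrG" "s \<notin> one" "s \<notin> zero" using sfacts[OF s] by auto
    assume "\<exists>sigma. dom sigma = forgot Z t \<and> sat G kind W (tau ++ sigma) s"
    then obtain sigma where dsig: "dom sigma = forgot Z t" and ss: "sat G kind W (tau ++ sigma) s"
      by blast
    obtain u where us: "(u, s) \<in> W" and Eu: "eval1 G kind W (tau ++ sigma) {} {} u"
      using ss sf unfolding sat_def by (cases rule: eval1.cases) auto
    have uf: "kind u = AndG" "u \<in> G" "u \<notin> one" "u \<notin> zero" using andin[OF s us] by auto
    obtain a b where ab: "{v. (v,u)\<in>W} = {a,b}" "a \<in> O1" "b \<in> O2" using andin[OF s us] by blast
    have allin: "\<forall>w. (w,u) \<in> W \<longrightarrow> eval1 G kind W (tau ++ sigma) {} {} w"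
      using Eu uf by (cases rule: eval1.cases) auto
    define s1 where "s1 = sigma |` forgot Z t1"
    define s2 where "s2 = sigma |` forgot Z t2"
    have d1: "dom s1 = forgot Z t1" unfolding s1_def using dsig ft by auto
    have d2: "dom s2 = forgot Z t2" unfolding s2_def using dsig ft by auto
    have ag1: "\<forall>x\<in>vvars t1. (tau ++ sigma) x = (tau1 ++ s1) x"
    proof
      fix x assume x: "x \<in> vvars t1"
      have "x \<notin> dom tau2" using x disj(1) kv2 assms(6) by auto
      moreover have "x \<in> dom sigma \<longleftrightarrow> x \<in> forgot Z t1" using dsig ft x kv2 disj(1) by auto
      ultimately show "(tau ++ sigma) x = (tau1 ++ s1) x" unfolding tau_def s1_def
        by (auto simp: map_add_def restrict_map_def split: option.split)
    qed
    have ag2: "\<forall>x\<in>vvars t2. (tau ++ sigma) x = (tau2 ++ s2) x"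
    proof
      fix x assume x: "x \<in> vvars t2"
      have "x \<notin> dom tau1" using x disj(1) kv1 assms(4) by auto
      moreover have "x \<in> dom sigma \<longleftrightarrow> x \<in> forgot Z t2" using dsig ft x kv1 disj(1) by auto
      ultimately show "(tau ++ sigma) x = (tau2 ++ s2) x" unfolding tau_def s2_def
        by (auto simp: map_add_def restrict_map_def split: option.split)
    qed
    have "sat G kind W (tau1 ++ s1) a"
      using loc[OF _ t1T ag1] ab allin O1l unfolding sat_def by blast
    then have aS: "a \<in> S1" using S1def ab(2) d1 by blast
    have "sat G kind W (tau2 ++ s2) b"
      using loc[OF _ t2T ag2] ab allin O2l unfolding sat_def by blast
    then have bS: "b \<in> S2" using S2def ab(3) d2 by blast
    have Eu': "eval1 G kind W Map.empty one zero u"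
      apply (rule eval1.andg)
      using uf aS bS ab(1) unfolding one_def by (auto intro: eval1.const1)
    show "eval1 G kind W Map.empty one zero s"
      using sf by (intro eval1.org[OF _ _ _ _ us Eu']) auto
  qed
  have j1: "join G kind W lam t1 t2 S1 S2 = {s \<in> Ot. eval1 G kind W Map.empty one zero s}"
    unfolding join_def Ot_def O1_def O2_def one_def zero_def t_def by (rule refl)
  have j2: "{s \<in> Ot. eval1 G kind W Map.empty one zero s} =
      {s \<in> Ot. \<exists>sigma. dom sigma = forgot Z t \<and> sat G kind W (tau ++ sigma) s}"
    proof (rule Collect_cong)
    fix s show "s \<in> Ot \<and> eval1 G kind W Map.empty one zero s \<longleftrightarrow>
      s \<in> Ot \<and> (\<exists>sigma. dom sigma = forgot Z t \<and> sat G kind W (tau ++ sigma) s)"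
      using main[of s] by blast
  qed
  have "join G kind W lam t1 t2 S1 S2 =
      {s \<in> Ot. \<exists>sigma. dom sigma = forgot Z t \<and> sat G kind W (tau ++ sigma) s}"
    using j1 j2 by (rule trans)
  then have os: "of_shape G kind W lam Z t tau (join G kind W lam t1 t2 S1 S2)"
    unfolding of_shape_def Ot_def[symmetric] .
  show ?thesis using dtau os unfolding t_def tau_def by (intro conjI)
qed
end
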